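(* Let $L = L_p + \varepsilon L_d \in \mathbb{DH}[t]$ be a line polynomial and $h \in \mathbb{R}[t]$ nonzero. Suppose there is a motion polynomial $C = P + \varepsilon D \in \mathbb{DH}[t]$ satisfying $$P\mathbf{k}\overline{P} = hL_p,\qquad -P\mathbf{k}\overline{D} - D\mathbf{k}\overline{P} = hL_d,\qquad P\overline{D} + D\overline{P} = 0,$$ and suppose there is $f \in \mathbb{R}[t]$, either linear or quadratic and irreducible over $\mathbb{R}$, such that $f^2$ divides $h/\gcd(\operatorname{rgcd}(L_p), h)$. Then there exist an integer $m \ge 1$ and a motion polynomial satisfying the same three equations with $h$ replaced by $h/f^{2m}$.
   Context: $\mathbb{H}$ denotes the real quaternions with units $\mathbf{i},\mathbf{j},\mathbf{k}$ and conjugation $\overline{p_0 + p_1\mathbf{i} + p_2\mathbf{j} + p_3\mathbf{k}} = p_0 - p_1\mathbf{i} - p_2\mathbf{j} - p_3\mathbf{k}$; $\mathbb{DH} = \mathbb{H} + \varepsilon\mathbb{H}$ with $\varepsilon^2=0$, $\varepsilon$ central. $\mathbb{H}[t]$, $\mathbb{DH}[t]$ are polynomial rings in a real indeterminate $t$ commuting with the coefficients; conjugation acts coefficientwise. A motion polynomial is $C = P + \varepsilon D \in \mathbb{DH}[t]$ with $P \ne 0$ and $P\overline{D} + D\overline{P} = 0$. A line polynomial is $L = L_p + \varepsilon L_d \in \mathbb{DH}[t]$ with $L_p, L_d$ vectorial (zero scalar part), $L_p\overline{L_d} + L_d\overline{L_p} = 0$, and $L_p \neq 0$. For $A \in \mathbb{H}[t]$,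 $\operatorname{rgcd}(A)$ is the monic gcd in $\mathbb{R}[t]$ of its four real coefficient polynomials. The three equations are equivalent to $C_\varepsilon\mathbf{k}\overline{C_\varepsilon} = hL$ (with $C_\varepsilon = P - \varepsilon D$) together with the Study condition. *)

theory Defs
  imports "HOL-Computational_Algebra.Computational_Algebra" "HOL-Computational_Algebra.Field_as_Ring"
begin

text \<open>Quaternion polynomials in H[t]: since the indeterminate t is real and commutes
with the coefficients, an element of H[t] is the same as a quaternion
p0 + p1 i + p2 j + p3 k with real polynomial components p0,...,p3.\<close>

datatype qpoly = QP (qc0: "real poly") (qc1: "real poly") (qc2: "real poly") (qc3: "real poly")

definition qzero :: qpoly where "qzero = QP 0 0 0 0"

definition qadd :: "qpoly \<Rightarrow> qpoly \<Rightarrow> qpoly" where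
  "qadd p q = QP (qc0 p + qc0 q) (qc1 p + qc1 q) (qc2 p + qc2 q) (qc3 p + qc3 q)"

definition qneg :: "qpoly \<Rightarrow> qpoly" where
  "qneg p = QP (- qc0 p) (- qc1 p) (- qc2 p) (- qc3 p)"

definition qmult :: "qpoly \<Rightarrow> qpoly \<Rightarrow> qpoly" where
  "qmult p q = QP
     (qc0 p * qc0 q - qc1 p * qc1 q - qc2 p * qc2 q - qc3 p * qc3 q)
     (qc0 p * qc1 q + qc1 p * qc0 q + qc2 p * qc3 q - qc3 p * qc2 q)
     (qc0 p * qc2 q - qc1 p * qc3 q + qc2 p * qc0 q + qc3 p * qc1 q)
     (qc0 p * qc3 q + qc1 p * qc2 q - qc2 p * qc1 q + qc3 p * qc0 q)"

definition qcnj :: "qpoly \<Rightarrow> qpoly" where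
  "qcnj p = QP (qc0 p) (- qc1 p) (- qc2 p) (- qc3 p)"

definition qscale :: "real poly \<Rightarrow> qpoly \<Rightarrow> qpoly" where
  "qscale h p = QP (h * qc0 p) (h * qc1 p) (h * qc2 p) (h * qc3 p)"

definition qk :: qpoly where "qk = QP 0 0 0 1"

definition qvectorial :: "qpoly \<Rightarrow> bool" where
  "qvectorial p \<longleftrightarrow> qc0 p = 0"

definition rgcd :: "qpoly \<Rightarrow> real poly" where
  "rgcd p = gcd (gcd (qc0 p) (qc1 p)) (gcd (qc2 p) (qc3 p))"

text \<open>Dual quaternion polynomial C = P + eps D represented by the pair (P, D).
Motion polynomial: P \<noteq> 0 and P conj(D) + D conj(P) = 0.\<close>
definition motion_poly :: "qpoly \<Rightarrow> qpoly \<Rightarrow> bool" where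
  "motion_poly P D \<longleftrightarrow> P \<noteq> qzero \<and> qadd (qmult P (qcnj D)) (qmult D (qcnj P)) = qzero"

definition line_poly :: "qpoly \<Rightarrow> qpoly \<Rightarrow> bool" where
  "line_poly Lp Ld \<longleftrightarrow> qvectorial Lp \<and> qvectorial Ld \<and>
     qadd (qmult Lp (qcnj Ld)) (qmult Ld (qcnj Lp)) = qzero \<and> Lp \<noteq> qzero"

definition three_eqs :: "qpoly \<Rightarrow> qpoly \<Rightarrow> real poly \<Rightarrow> qpoly \<Rightarrow> qpoly \<Rightarrow> bool" where
  "three_eqs P D h Lp Ld \<longleftrightarrow>
     qmult (qmult P qk) (qcnj P) = qscale h Lp \<and>
     qadd (qneg (qmult (qmult P qk) (qcnj D))) (qneg (qmult (qmult D qk) (qcnj P))) = qscale h Ld \<and>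
     qadd (qmult P (qcnj D)) (qmult D (qcnj P)) = qzero"

end

theory Submission
  imports Defs
begin


definition cp :: "real poly \<Rightarrow> complex poly" where "cp p = map_poly of_real p"
definition cj :: "complex poly \<Rightarrow> complex poly" where "cj p = map_poly cnj p"
definition JJ :: "complex poly" where "JJ = [:\<i>:]"

lemma coeff_cp [simp]: "coeff (cp p) n = of_real (coeff p n)"
  by (simp add: cp_def coeff_map_poly)
lemma coeff_cj [simp]: "coeff (cj p) n = cnj (coeff p n)"
  by (simp add: cj_def coeff_map_poly)

lemma cp_0 [simp]: "cp 0 = 0" by (simp add: poly_eq_iff)
lemma cp_1 [simp]: "cp 1 = 1" by (simp add: poly_eq_iff coeff_1 )
lemma cp_add [simp]: "cp (p + q) = cp p + cp q" by (simp add: poly_eq_iff)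
lemma cp_diff [simp]: "cp (p - q) = cp p - cp q" by (simp add: poly_eq_iff)
lemma cp_minus [simp]: "cp (- p) = - cp p" by (simp add: poly_eq_iff)
lemma cp_mult [simp]: "cp (p * q) = cp p * cp q" by (simp add: poly_eq_iff coeff_mult)
lemma cp_power [simp]: "cp (p ^ n) = cp p ^ n" by (induct n) auto
lemma cp_smult [simp]: "cp (smult c p) = smult (of_real c) (cp p)" by (simp add: poly_eq_iff)
lemma cp_of_nat [simp]: "cp (of_nat n) = of_nat n" by (induct n) auto
lemma cp_numeral [simp]: "cp (numeral n) = numeral n" by (metis of_nat_numeral cp_of_nat)
lemma cp_inj: "cp p = cp q \<longleftrightarrow> p = q" by (auto simp: poly_eq_iff)
lemma cp_eq_0 [simp]: "cp p = 0 \<longleftrightarrow> p = 0" using cp_inj[of p 0] by simp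
lemma degree_cp [simp]: "degree (cp p) = degree p" by (simp add: cp_def degree_map_poly)

lemma cj_0 [simp]: "cj 0 = 0" by (simp add: poly_eq_iff)
lemma cj_1 [simp]: "cj 1 = 1" by (simp add: poly_eq_iff coeff_1 )
lemma cj_add [simp]: "cj (p + q) = cj p + cj q" by (simp add: poly_eq_iff)
lemma cj_diff [simp]: "cj (p - q) = cj p - cj q" by (simp add: poly_eq_iff)
lemma cj_minus [simp]: "cj (- p) = - cj p" by (simp add: poly_eq_iff)
lemma cj_mult [simp]: "cj (p * q) = cj p * cj q" by (simp add: poly_eq_iff coeff_mult cnj_sum)
lemma cj_power [simp]: "cj (p ^ n) = cj p ^ n" by (induct n) auto
lemma cj_cj [simp]: "cj (cj p) = p" by (simp add: poly_eq_iff)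
lemma cj_cp [simp]: "cj (cp p) = cp p" by (simp add: poly_eq_iff)
lemma cj_JJ [simp]: "cj JJ = - JJ" by (simp add: poly_eq_iff JJ_def coeff_pCons split: nat.splits)
lemma JJ_sq: "JJ * JJ = -1" by (simp add: JJ_def poly_eq_iff coeff_pCons split: nat.splits)
lemma cj_lin [simp]: "cj [:a, b:] = [:cnj a, cnj b:]" by (simp add: poly_eq_iff coeff_pCons split: nat.splits)
lemma cj_eq_0 [simp]: "cj p = 0 \<longleftrightarrow> p = 0" by (metis cj_0 cj_cj)
lemma cj_dvd: "a dvd b \<Longrightarrow> cj a dvd cj b" by (metis cj_mult dvdE dvdI)
lemma cj_dvd_iff: "cj a dvd cj b \<longleftrightarrow> a dvd b" by (metis cj_cj cj_dvd)


definition cX :: "qpoly \<Rightarrow> complex poly" where "cX P = cp (qc0 P) + JJ * cp (qc3 P)"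
definition cY :: "qpoly \<Rightarrow> complex poly" where "cY P = cp (qc1 P) - JJ * cp (qc2 P)"

lemma tr_K3: "cp (qc3 (qmult (qmult P qk) (qcnj P))) = cX P * cj (cX P) - cY P * cj (cY P)"
  unfolding cX_def cY_def qmult_def qk_def qcnj_def using JJ_sq by simp algebra
lemma tr_K2: "2 * (cX P * cj (cY P)) = cp (- qc2 (qmult (qmult P qk) (qcnj P))) + JJ * cp (qc1 (qmult (qmult P qk) (qcnj P)))"
  unfolding cX_def cY_def qmult_def qk_def qcnj_def using JJ_sq by simp algebra
lemma tr_K0: "qc0 (qmult (qmult P qk) (qcnj P)) = 0"
  unfolding qmult_def qk_def qcnj_def by (simp add: algebra_simps)

definition hs :: "complex poly \<Rightarrow> complex poly \<Rightarrow> complex poly" where "hs A B = A * cj B + B * cj A"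
definition mm :: "complex poly \<Rightarrow> complex poly \<Rightarrow> complex poly \<Rightarrow> complex poly \<Rightarrow> complex poly"
  where "mm X Y Z W = X * cj W + Z * cj Y"

definition dualq :: "qpoly \<Rightarrow> qpoly \<Rightarrow> qpoly" where
  "dualq P D = qadd (qneg (qmult (qmult P qk) (qcnj D))) (qneg (qmult (qmult D qk) (qcnj P)))"
definition studyq :: "qpoly \<Rightarrow> qpoly \<Rightarrow> qpoly" where
  "studyq P D = qadd (qmult P (qcnj D)) (qmult D (qcnj P))"

lemma tr_D3: "cp (qc3 (dualq P D)) = - (hs (cX P) (cX D) - hs (cY P) (cY D))"
  unfolding dualq_def hs_def cX_def cY_def qadd_def qneg_def qmult_def qk_def qcnj_def using JJ_sq by simp algebra
lemma tr_D2: "2 * mm (cX P) (cY P) (cX D) (cY D) = cp (qc2 (dualq P D)) - JJ * cp (qc1 (dualq P D))"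
  unfolding dualq_def mm_def cX_def cY_def qadd_def qneg_def qmult_def qk_def qcnj_def using JJ_sq by simp algebra
lemma tr_D0: "qc0 (dualq P D) = 0"
  unfolding dualq_def qadd_def qneg_def qmult_def qk_def qcnj_def by (simp add: algebra_simps)
lemma tr_S0: "cp (qc0 (studyq P D)) = hs (cX P) (cX D) + hs (cY P) (cY D)"
  unfolding studyq_def hs_def cX_def cY_def qadd_def qmult_def qcnj_def using JJ_sq by simp algebra
lemma tr_S123: "qc1 (studyq P D) = 0 \<and> qc2 (studyq P D) = 0 \<and> qc3 (studyq P D) = 0"
  unfolding studyq_def qadd_def qmult_def qcnj_def by (simp add: algebra_simps)

lemma JJ_mult: "JJ * p = smult \<i> p" by (simp add: JJ_def)
lemma coeff_JJ_mult [simp]: "coeff (JJ * p) n = \<i> * coeff p n" by (simp add: JJ_mult)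

lemma sep_ReIm:
  assumes "cp a + JJ * cp b = cp c + JJ * cp d" shows "a = c \<and> b = d"
proof -
  have "\<And>n. complex_of_real (coeff a n) + \<i> * complex_of_real (coeff b n) =
    complex_of_real (coeff c n) + \<i> * complex_of_real (coeff d n)"
    using arg_cong[OF assms, of "\<lambda>p. coeff p n" for n] by simp
  then have "\<And>n. coeff a n = coeff c n \<and> coeff b n = coeff d n"
    by (simp add: complex_eq_iff)
  then show ?thesis by (simp add: poly_eq_iff)
qed

definition CC :: "complex poly \<Rightarrow> complex poly \<Rightarrow> complex poly \<Rightarrow> complex poly \<Rightarrow> real poly \<Rightarrow> qpoly \<Rightarrow> qpoly \<Rightarrow> bool"
  where "CC X Y Z W h Lp Ld \<longleftrightarrow>
   X * cj X - Y * cj Y = cp h * cp (qc3 Lp) \<and>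
   2 * (X * cj Y) = cp h * (cp (- qc2 Lp) + JJ * cp (qc1 Lp)) \<and>
   - (hs X Z - hs Y W) = cp h * cp (qc3 Ld) \<and>
   2 * mm X Y Z W = cp h * (cp (qc2 Ld) - JJ * cp (qc1 Ld)) \<and>
   hs X Z + hs Y W = 0"

lemma tr_iff:
  assumes "qvectorial Lp" "qvectorial Ld"
  shows "three_eqs P D h Lp Ld \<longleftrightarrow> CC (cX P) (cY P) (cX D) (cY D) h Lp Ld"
proof
  assume "three_eqs P D h Lp Ld"
  then have K: "qmult (qmult P qk) (qcnj P) = qscale h Lp" and Du: "dualq P D = qscale h Ld"
    and S: "studyq P D = qzero"
    unfolding three_eqs_def dualq_def studyq_def by auto
  have 1: "cX P * cj (cX P) - cY P * cj (cY P) = cp h * cp (qc3 Lp)"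
    using tr_K3[of P] K by (simp add: qscale_def)
  have 2: "2 * (cX P * cj (cY P)) = cp h * (cp (- qc2 Lp) + JJ * cp (qc1 Lp))"
    using tr_K2[of P] K by (simp add: qscale_def algebra_simps)
  have 3: "- (hs (cX P) (cX D) - hs (cY P) (cY D)) = cp h * cp (qc3 Ld)"
    using tr_D3[of P D] Du by (simp add: qscale_def)
  have 4: "2 * mm (cX P) (cY P) (cX D) (cY D) = cp h * (cp (qc2 Ld) - JJ * cp (qc1 Ld))"
    using tr_D2[of P D] Du by (simp add: qscale_def algebra_simps)
  have 5: "hs (cX P) (cX D) + hs (cY P) (cY D) = 0"
    using tr_S0[of P D] S by (simp add: qzero_def)
  show "CC (cX P) (cY P) (cX D) (cY D) h Lp Ld" unfolding CC_def using 1 2 3 4 5 by blast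
next
  assume "CC (cX P) (cY P) (cX D) (cY D) h Lp Ld"
  then have 1: "cX P * cj (cX P) - cY P * cj (cY P) = cp h * cp (qc3 Lp)"
   and 2: "2 * (cX P * cj (cY P)) = cp h * (cp (- qc2 Lp) + JJ * cp (qc1 Lp))"
   and 3: "- (hs (cX P) (cX D) - hs (cY P) (cY D)) = cp h * cp (qc3 Ld)"
   and 4: "2 * mm (cX P) (cY P) (cX D) (cY D) = cp h * (cp (qc2 Ld) - JJ * cp (qc1 Ld))"
   and 5: "hs (cX P) (cX D) + hs (cY P) (cY D) = 0"
    unfolding CC_def by blast+
  let ?K = "qmult (qmult P qk) (qcnj P)"
  have "cp (qc3 ?K) = cp (h * qc3 Lp)" using 1 tr_K3[of P] by simp
  then have k3: "qc3 ?K = h * qc3 Lp" by (metis cp_inj)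
  have "cp (- qc2 ?K) + JJ * cp (qc1 ?K) = cp h * (cp (- qc2 Lp) + JJ * cp (qc1 Lp))"
    using 2 tr_K2[of P] by simp
  also have "\<dots> = cp (- (h * qc2 Lp)) + JJ * cp (h * qc1 Lp)" by (simp add: algebra_simps)
  finally have "cp (- qc2 ?K) + JJ * cp (qc1 ?K) = cp (- (h * qc2 Lp)) + JJ * cp (h * qc1 Lp)" .
  then have k12: "- qc2 ?K = - (h * qc2 Lp) \<and> qc1 ?K = h * qc1 Lp" by (rule sep_ReIm)
  have K: "?K = qscale h Lp"
    using k3 k12 tr_K0[of P] assms(1) by (intro qpoly.expand) (auto simp: qscale_def qvectorial_def)
  have "cp (qc3 (dualq P D)) = cp (h * qc3 Ld)" using 3 tr_D3[of P D] by simp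
  then have d3: "qc3 (dualq P D) = h * qc3 Ld" by (metis cp_inj)
  have "cp (qc2 (dualq P D)) + JJ * cp (- qc1 (dualq P D)) = cp h * (cp (qc2 Ld) - JJ * cp (qc1 Ld))"
    using 4 tr_D2[of P D] by (simp add: algebra_simps)
  also have "\<dots> = cp (h * qc2 Ld) + JJ * cp (- (h * qc1 Ld))" by (simp add: algebra_simps)
  finally have "cp (qc2 (dualq P D)) + JJ * cp (- qc1 (dualq P D)) = cp (h * qc2 Ld) + JJ * cp (- (h * qc1 Ld))" .
  then have d12: "qc2 (dualq P D) = h * qc2 Ld \<and> - qc1 (dualq P D) = - (h * qc1 Ld)" by (rule sep_ReIm)
  have Du: "dualq P D = qscale h Ld"
    using d3 d12 tr_D0[of P D] assms(2) by (intro qpoly.expand) (auto simp: qscale_def qvectorial_def)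
  have "cp (qc0 (studyq P D)) = cp 0" using 5 tr_S0[of P D] by simp
  then have "qc0 (studyq P D) = 0" by (simp only: cp_inj)
  then have S: "studyq P D = qzero"
    using tr_S123[of P D] by (intro qpoly.expand) (auto simp: qzero_def)
  show "three_eqs P D h Lp Ld" using K Du S unfolding three_eqs_def dualq_def studyq_def by blast
qed



lemma cj_hs: "cj (hs A B) = hs A B" by (simp add: hs_def algebra_simps)

lemma generic:
  fixes g X0 Y0 Z W a b e0 F :: "complex poly"
  assumes bez: "a * X0 + b * Y0 + e0 = 1" and Fe0: "F dvd e0" and cjF: "cj F = F"
    and M11: "F dvd hs (g * X0) Z" and M12: "F dvd mm (g * X0) (g * Y0) Z W"
    and M22: "F dvd hs (g * Y0) W"
  defines "d \<equiv> X0 * W - Y0 * Z" and "\<mu> \<equiv> a * Z + b * W"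
  shows "F dvd g * cj d" "F dvd \<mu> * cj g + cj \<mu> * g"
    "Z - \<mu> * X0 = e0 * Z - b * d" "W - \<mu> * Y0 = e0 * W + a * d"
proof -
  have M21: "F dvd cj (mm (g * X0) (g * Y0) Z W)"
    using cj_dvd[OF M12] cjF by simp
  have e1: "hs (g * X0) Z * cj Y0 - mm (g * X0) (g * Y0) Z W * cj X0 = - (g * X0 * cj d)"
    unfolding hs_def mm_def d_def by simp algebra
  have e2: "cj (mm (g * X0) (g * Y0) Z W) * cj Y0 - hs (g * Y0) W * cj X0 = - (g * Y0 * cj d)"
    unfolding hs_def mm_def d_def by simp algebra
  have f1: "F dvd g * X0 * cj d"
  proof -
    have "F dvd hs (g * X0) Z * cj Y0 - mm (g * X0) (g * Y0) Z W * cj X0"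
      using M11 M12 by (intro dvd_diff dvd_mult2)
    then show ?thesis using e1 by (metis dvd_minus_iff)
  qed
  have f2: "F dvd g * Y0 * cj d"
  proof -
    have "F dvd cj (mm (g * X0) (g * Y0) Z W) * cj Y0 - hs (g * Y0) W * cj X0"
      using M21 M22 by (intro dvd_diff dvd_mult2)
    then show ?thesis using e2 by (metis dvd_minus_iff)
  qed
  have "g * cj d = a * (g * X0 * cj d) + b * (g * Y0 * cj d) + e0 * (g * cj d)"
    using bez by algebra
  moreover have "F dvd a * (g * X0 * cj d) + b * (g * Y0 * cj d) + e0 * (g * cj d)"
    by (rule dvd_add[OF dvd_add[OF dvd_mult[OF f1] dvd_mult[OF f2]] dvd_mult2[OF Fe0]])
  ultimately show "F dvd g * cj d" by simp
  define Q where "Q = a * cj a * hs (g * X0) Z + a * cj b * mm (g * X0) (g * Y0) Z W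
     + b * cj a * cj (mm (g * X0) (g * Y0) Z W) + b * cj b * hs (g * Y0) W"
  have FQ: "F dvd Q" unfolding Q_def using M11 M12 M21 M22 by (intro dvd_add dvd_mult)
  have Fce0: "F dvd cj e0" using cj_dvd[OF Fe0] cjF by simp
  have "cj a * cj X0 + cj b * cj Y0 + cj e0 = 1" using arg_cong[OF bez, of cj] by simp
  then have "\<mu> * cj g + cj \<mu> * g = Q + e0 * g * cj \<mu> + cj e0 * cj g * \<mu>"
    using bez unfolding Q_def \<mu>_def hs_def mm_def by simp algebra
  moreover have "F dvd Q + e0 * g * cj \<mu> + cj e0 * cj g * \<mu>"
    by (rule dvd_add[OF dvd_add[OF FQ dvd_mult2[OF dvd_mult2[OF Fe0]]] dvd_mult2[OF dvd_mult2[OF Fce0]]])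
  ultimately show "F dvd \<mu> * cj g + cj \<mu> * g" by simp
  show "Z - \<mu> * X0 = e0 * Z - b * d" using bez unfolding \<mu>_def d_def by algebra
  show "W - \<mu> * Y0 = e0 * W + a * d" using bez unfolding \<mu>_def d_def by algebra
qed



lemma assembly:
  fixes X Y Z W X' Y' Z' W' u G1 G2 :: "complex poly" and f h h' :: "real poly"
  assumes cc: "CC X Y Z W h Lp Ld" and hh: "h = f ^ 2 * h'" and f0: "f \<noteq> 0"
    and uX: "X = u * X'" and uY: "Y = u * Y'" and uu: "u * cj u = cp f ^ 2"
    and g11: "G1 * cj X + X * cj G1 = 0" and g12: "G1 * cj Y + X * cj G2 = 0"
    and g22: "G2 * cj Y + Y * cj G2 = 0"
    and eZ: "(Z - G1) * cj u = cp f ^ 2 * Z'" and eW: "(W - G2) * cj u = cp f ^ 2 * W'"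
  shows "CC X' Y' Z' W' h' Lp Ld"
proof -
  define F where "F = cp f ^ 2"
  have F0: "F \<noteq> 0" using f0 by (simp add: F_def)
  have cF: "cj F = F" by (simp add: F_def)
  have eZ': "(cj Z - cj G1) * u = F * cj Z'" using arg_cong[OF eZ, of cj] by (simp add: F_def)
  have eW': "(cj W - cj G2) * u = F * cj W'" using arg_cong[OF eW, of cj] by (simp add: F_def)
  have cuu: "cj u * u = F" using uu by (simp add: F_def mult.commute)
  have cX: "cj X = cj u * cj X'" "cj Y = cj u * cj Y'" using uX uY by simp_all
  have ch: "cp h = F * cp h'" using hh by (simp add: F_def)
  have cg12: "cj G1 * Y + cj X * G2 = 0" using arg_cong[OF g12, of cj] by simp
  have i1: "F * (X' * cj X' - Y' * cj Y') = X * cj X - Y * cj Y"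
    using uX uY cX uu unfolding F_def by (simp; algebra)
  have i2: "F * (X' * cj Y') = X * cj Y"
    using uX uY cX uu unfolding F_def by (simp; algebra)
  have i3: "F * hs X' Z' = hs X Z"
    using uX cX eZ eZ' g11 unfolding hs_def F_def by (simp; algebra)
  have i4: "F * hs Y' W' = hs Y W"
    using uY cX eW eW' g22 unfolding hs_def F_def by (simp; algebra)
  have i5: "F * mm X' Y' Z' W' = mm X Y Z W"
    using uX cX eW' eZ g12 unfolding mm_def F_def by (simp; algebra)
  from cc have c1: "X * cj X - Y * cj Y = cp h * cp (qc3 Lp)"
   and c2: "2 * (X * cj Y) = cp h * (cp (- qc2 Lp) + JJ * cp (qc1 Lp))"
   and c3: "- (hs X Z - hs Y W) = cp h * cp (qc3 Ld)"
   and c4: "2 * mm X Y Z W = cp h * (cp (qc2 Ld) - JJ * cp (qc1 Ld))"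
   and c5: "hs X Z + hs Y W = 0"
    unfolding CC_def by blast+
  have "F * (X' * cj X' - Y' * cj Y') = F * (cp h' * cp (qc3 Lp))"
    using i1 c1 ch by simp
  then have d1: "X' * cj X' - Y' * cj Y' = cp h' * cp (qc3 Lp)" using F0 by simp
  have "F * (2 * (X' * cj Y')) = 2 * (X * cj Y)" using i2 by (metis mult.left_commute)
  also have "\<dots> = F * (cp h' * (cp (- qc2 Lp) + JJ * cp (qc1 Lp)))"
    using c2 ch by (simp only: mult.assoc)
  finally have "F * (2 * (X' * cj Y')) = F * (cp h' * (cp (- qc2 Lp) + JJ * cp (qc1 Lp)))" .
  then have d2: "2 * (X' * cj Y') = cp h' * (cp (- qc2 Lp) + JJ * cp (qc1 Lp))" using F0 by simp
  have "F * (- (hs X' Z' - hs Y' W')) = F * (cp h' * cp (qc3 Ld))"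
    using i3 i4 c3 ch by (simp add: algebra_simps)
  then have d3: "- (hs X' Z' - hs Y' W') = cp h' * cp (qc3 Ld)" using F0 by simp
  have "F * (2 * mm X' Y' Z' W') = 2 * mm X Y Z W" using i5 by (metis mult.left_commute)
  also have "\<dots> = F * (cp h' * (cp (qc2 Ld) - JJ * cp (qc1 Ld)))"
    using c4 ch by (simp only: mult.assoc)
  finally have "F * (2 * mm X' Y' Z' W') = F * (cp h' * (cp (qc2 Ld) - JJ * cp (qc1 Ld)))" .
  then have d4: "2 * mm X' Y' Z' W' = cp h' * (cp (qc2 Ld) - JJ * cp (qc1 Ld))" using F0 by simp
  have "F * (hs X' Z' + hs Y' W') = F * 0"
    using i3 i4 c5 by (simp add: algebra_simps)
  then have d5: "hs X' Z' + hs Y' W' = 0" using F0 by simp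
  show ?thesis unfolding CC_def using d1 d2 d3 d4 d5 by blast
qed



definition lin :: "complex \<Rightarrow> complex poly" where "lin z = [:- z, 1:]"

lemma lin_nz [simp]: "lin z \<noteq> 0" by (simp add: lin_def)
lemma lin_pow_nz [simp]: "lin z ^ n \<noteq> 0" by simp
lemma cj_lin' [simp]: "cj (lin z) = lin (cnj z)" by (simp add: lin_def)
lemma lin_dvd_iff: "lin z dvd p \<longleftrightarrow> poly p z = 0" by (simp add: lin_def poly_eq_0_iff_dvd)
lemma prime_lin: "prime_elem (lin z)" unfolding lin_def by (rule prime_elem_linear_field_poly) simp
lemma poly_lin [simp]: "poly (lin z) w = w - z" by (simp add: lin_def)

lemma coprime_lin:
  assumes "z \<noteq> w" shows "coprime (lin z ^ m) (lin w ^ n)"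
proof -
  have "\<not> lin z dvd lin w" using assms by (simp add: lin_dvd_iff)
  then have "coprime (lin z) (lin w)" by (rule prime_elem_imp_coprime[OF prime_lin])
  then show ?thesis by simp
qed

lemma pow_cancel:
  assumes "(l::complex poly) ^ s dvd l ^ a * q" "a \<le> s" "l \<noteq> 0"
  shows "l ^ (s - a) dvd q"
proof -
  have "l ^ s = l ^ a * l ^ (s - a)" using assms(2) by (metis le_add_diff_inverse power_add)
  then have "l ^ a * l ^ (s - a) dvd l ^ a * q" using assms(1) by metis
  then show ?thesis using assms(3) by (simp only: dvd_mult_cancel_left power_eq_0_iff) simp
qed

lemma lin_cancel_other:
  assumes "lin z ^ n dvd lin w ^ m * q" "z \<noteq> w"
  shows "lin z ^ n dvd q"
  using assms coprime_lin[of z w n m] by (simp add: coprime_dvd_mult_right_iff)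

lemma lin_cancel2:
  assumes "lin z ^ s dvd lin z ^ a * (lin w ^ m * q)" "z \<noteq> w" "a \<le> s"
  shows "lin z ^ (s - a) dvd q"
  using pow_cancel[OF assms(1) assms(3) lin_nz] assms(2) lin_cancel_other by blast

lemma bezout_local:
  fixes X0 Y0 :: "complex poly"
  assumes "\<not> (lin z dvd X0 \<and> lin z dvd Y0)" "\<not> (lin w dvd X0 \<and> lin w dvd Y0)"
  shows "\<exists>a b e0. a * X0 + b * Y0 + e0 = 1 \<and> lin z ^ s * lin w ^ s dvd e0"
proof -
  define G0 where "G0 = gcd X0 Y0"
  have "\<not> lin z dvd G0" using assms(1) unfolding G0_def by (meson dvd_trans gcd_dvd1 gcd_dvd2)
  then have c1: "coprime (lin z) G0" by (rule prime_elem_imp_coprime[OF prime_lin])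
  have "\<not> lin w dvd G0" using assms(2) unfolding G0_def by (meson dvd_trans gcd_dvd1 gcd_dvd2)
  then have c2: "coprime (lin w) G0" by (rule prime_elem_imp_coprime[OF prime_lin])
  have "coprime (lin z ^ s * lin w ^ s) G0" using c1 c2 by simp
  then have g1: "gcd (lin z ^ s * lin w ^ s) G0 = 1" by simp
  obtain p q where pq: "p * (lin z ^ s * lin w ^ s) + q * G0 = 1"
    using bezout_coefficients_fst_snd[of "lin z ^ s * lin w ^ s" G0] g1 by metis
  obtain p' q' where pq': "p' * X0 + q' * Y0 = G0"
    using bezout_coefficients_fst_snd[of X0 Y0] unfolding G0_def by metis
  have "(q * p') * X0 + (q * q') * Y0 + p * (lin z ^ s * lin w ^ s) =
      q * (p' * X0 + q' * Y0) + p * (lin z ^ s * lin w ^ s)" by (simp add: algebra_simps)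
  also have "\<dots> = 1" using pq pq' by (simp add: add.commute)
  finally have "(q * p') * X0 + (q * q') * Y0 + p * (lin z ^ s * lin w ^ s) = 1" .
  then show ?thesis by (metis dvd_triv_right)
qed



lemma gamma_ok:
  fixes g X0 Y0 \<mu> \<sigma> :: "complex poly"
  assumes "\<sigma> * cj g + g * cj \<sigma> = \<mu> * cj g + cj \<mu> * g"
  shows "((\<mu> - \<sigma>) * X0) * cj (g * X0) + (g * X0) * cj ((\<mu> - \<sigma>) * X0) = 0"
    "((\<mu> - \<sigma>) * X0) * cj (g * Y0) + (g * X0) * cj ((\<mu> - \<sigma>) * Y0) = 0"
    "((\<mu> - \<sigma>) * Y0) * cj (g * Y0) + (g * Y0) * cj ((\<mu> - \<sigma>) * Y0) = 0"
  using assms by (simp; algebra)+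

lemma half_poly: "[:1/2:] + [:1/2:] = (1::complex poly)"
  by (simp add: one_pCons)

lemma cj_half [simp]: "cj [:1/2:] = [:1/2:]"
  by (simp add: poly_eq_iff coeff_pCons split: nat.splits)

lemma sigma_ok:
  fixes g \<tau> \<mu> :: "complex poly"
  assumes "\<mu> * cj g + cj \<mu> * g = cj g * \<tau>"
  shows "([:1/2:] * \<tau>) * cj g + g * cj ([:1/2:] * \<tau>) = \<mu> * cj g + cj \<mu> * g"
proof -
  have "cj (\<mu> * cj g + cj \<mu> * g) = cj (cj g * \<tau>)" using assms by simp
  then have c: "cj \<mu> * g + \<mu> * cj g = g * cj \<tau>" by simp
  show ?thesis using assms c half_poly by (simp only: cj_mult cj_half) algebra
qed

lemma dvd_ll2:
  fixes l l' :: "complex poly"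
  assumes "2 \<le> A" "2 \<le> B"
  shows "(l * l') ^ 2 dvd l ^ A * l' ^ B"
proof -
  have "l ^ A = l ^ 2 * l ^ (A - 2)" "l' ^ B = l' ^ 2 * l' ^ (B - 2)"
    using assms by (metis le_add_diff_inverse power_add)+
  then show ?thesis by (simp add: power_mult_distrib algebra_simps)
qed



lemma core_quad:
  fixes z :: complex and X0 Y0 Z W :: "complex poly" and \<alpha> \<alpha>' s :: nat
  defines "l \<equiv> lin z" and "l' \<equiv> lin (cnj z)"
  defines "g \<equiv> l ^ \<alpha> * l' ^ \<alpha>'"
  assumes zr: "z \<noteq> cnj z"
    and nd1: "\<not> (l dvd X0 \<and> l dvd Y0)" and nd2: "\<not> (l' dvd X0 \<and> l' dvd Y0)"
    and M11: "(l * l') ^ s dvd hs (g * X0) Z"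
    and M12: "(l * l') ^ s dvd mm (g * X0) (g * Y0) Z W"
    and M22: "(l * l') ^ s dvd hs (g * Y0) W"
    and i1: "\<alpha> \<le> \<alpha>'" and i2: "s \<le> \<alpha> + \<alpha>'" and i3: "\<alpha> + \<alpha>' + 2 \<le> 2 * s"
  shows "\<exists>u0 X' Y' G1 G2 Z' W'. g * X0 = u0 * X' \<and> g * Y0 = u0 * Y' \<and> u0 * cj u0 = (l * l') ^ 2 \<and>
    G1 * cj (g * X0) + (g * X0) * cj G1 = 0 \<and> G1 * cj (g * Y0) + (g * X0) * cj G2 = 0 \<and>
    G2 * cj (g * Y0) + (g * Y0) * cj G2 = 0 \<and>
    (Z - G1) * cj u0 = (l * l') ^ 2 * Z' \<and> (W - G2) * cj u0 = (l * l') ^ 2 * W'"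
proof -
  have cl: "cj l = l'" "cj l' = l" unfolding l_def l'_def by simp_all
  have zr': "cnj z \<noteq> z" using zr by simp
  obtain a b e0 where bez: "a * X0 + b * Y0 + e0 = 1" and e0d: "l ^ s * l' ^ s dvd e0"
    using bezout_local[of z X0 Y0 "cnj z" s] nd1 nd2 unfolding l_def l'_def by blast
  define F where "F = (l * l') ^ s"
  have FF: "F = l ^ s * l' ^ s" unfolding F_def by (simp add: power_mult_distrib)
  have cF: "cj F = F" unfolding F_def using cl by (simp add: mult.commute)
  have Fe0: "F dvd e0" using e0d FF by simp
  define d where "d = X0 * W - Y0 * Z"
  define \<mu> where "\<mu> = a * Z + b * W"
  have G: "F dvd g * cj d" "F dvd \<mu> * cj g + cj \<mu> * g"
    "Z - \<mu> * X0 = e0 * Z - b * d" "W - \<mu> * Y0 = e0 * W + a * d"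
    using generic[OF bez Fe0 cF, of g Z W] M11 M12 M22 unfolding F_def d_def \<mu>_def by auto
  have s2: "2 \<le> s" using i2 i3 by linarith
  have as: "\<alpha> \<le> s" using i1 i2 i3 by linarith
  have e02: "(l * l') ^ 2 dvd e0" using Fe0 s2 unfolding F_def by (meson dvd_trans le_imp_power_dvd)
  have lsF: "l ^ s dvd F" "l' ^ s dvd F" using FF by simp_all
  have cjg: "cj g = l ^ \<alpha>' * l' ^ \<alpha>" unfolding g_def using cl by (simp add: mult.commute)
  have "l ^ s dvd l ^ \<alpha> * (l' ^ \<alpha>' * cj d)"
    using dvd_trans[OF lsF(1) G(1)] unfolding g_def by (simp add: mult.assoc)
  then have "l ^ (s - \<alpha>) dvd cj d" using lin_cancel2[of z s \<alpha> "cnj z"] zr as unfolding l_def l'_def by blast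
  then have dl': "l' ^ (s - \<alpha>) dvd d" using cj_dvd[of "l ^ (s - \<alpha>)" "cj d"] cl by simp
  show ?thesis
  proof (cases "\<alpha>' \<le> s")
    case True
    have "l' ^ s dvd l' ^ \<alpha>' * (l ^ \<alpha> * cj d)"
      using dvd_trans[OF lsF(2) G(1)] unfolding g_def by (simp add: algebra_simps)
    then have "l' ^ (s - \<alpha>') dvd cj d" using lin_cancel2[of "cnj z" s \<alpha>' z] zr' True unfolding l_def l'_def by blast
    then have dl: "l ^ (s - \<alpha>') dvd d" using cj_dvd[of "l' ^ (s - \<alpha>')" "cj d"] cl by simp
    define Q where "Q = l ^ (s - \<alpha>') * l' ^ (s - \<alpha>)"
    have cop: "coprime (l ^ (s - \<alpha>')) (l' ^ (s - \<alpha>))" using coprime_lin[OF zr] unfolding l_def l'_def by blast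
    have Qd: "Q dvd d" unfolding Q_def using dl dl' cop by (rule divides_mult)
    obtain k where k: "\<mu> * cj g + cj \<mu> * g = F * k" using G(2) by (elim dvdE)
    have FQ: "F = cj g * Q" unfolding FF cjg Q_def using True as
      by (simp add: algebra_simps flip: power_add)
    define \<tau> where "\<tau> = Q * k"
    have rho: "\<mu> * cj g + cj \<mu> * g = cj g * \<tau>" unfolding \<tau>_def using k FQ by (simp add: mult.assoc)
    define \<sigma> where "\<sigma> = [:1/2:] * \<tau>"
    have sig: "\<sigma> * cj g + g * cj \<sigma> = \<mu> * cj g + cj \<mu> * g" unfolding \<sigma>_def by (rule sigma_ok[OF rho])
    have Qs: "Q dvd \<sigma>" unfolding \<sigma>_def \<tau>_def by (metis dvd_mult mult.left_commute dvd_triv_left)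
    define x where "x = min 2 (s - \<alpha>')"
    define y where "y = 2 - x"
    have xa: "x \<le> \<alpha>" and ya: "y \<le> \<alpha>'" and e1: "2 \<le> s - \<alpha>' + y" and e2: "2 \<le> s - \<alpha> + x"
      and xy: "x + y = 2"
      unfolding x_def y_def using i1 i2 i3 True by auto
    define u0 where "u0 = l ^ x * l' ^ y"
    have cu0: "cj u0 = l ^ y * l' ^ x" unfolding u0_def using cl by (simp add: mult.commute)
    have "u0 * cj u0 = (l ^ x * l ^ y) * (l' ^ x * l' ^ y)" unfolding cu0 unfolding u0_def by (simp add: algebra_simps)
    also have "\<dots> = (l * l') ^ 2" using xy by (simp add: power_mult_distrib flip: power_add)
    finally have uu: "u0 * cj u0 = (l * l') ^ 2" .
    define X' where "X' = l ^ (\<alpha> - x) * l' ^ (\<alpha>' - y) * X0"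
    define Y' where "Y' = l ^ (\<alpha> - x) * l' ^ (\<alpha>' - y) * Y0"
    have gu: "g = u0 * (l ^ (\<alpha> - x) * l' ^ (\<alpha>' - y))" unfolding g_def u0_def using xa ya
      by (simp add: algebra_simps flip: power_add)
    have gX: "g * X0 = u0 * X'" "g * Y0 = u0 * Y'" unfolding X'_def Y'_def gu by (simp_all add: mult.assoc)
    define G1 where "G1 = (\<mu> - \<sigma>) * X0"
    define G2 where "G2 = (\<mu> - \<sigma>) * Y0"
    have gam: "G1 * cj (g * X0) + (g * X0) * cj G1 = 0" "G1 * cj (g * Y0) + (g * X0) * cj G2 = 0"
      "G2 * cj (g * Y0) + (g * Y0) * cj G2 = 0"
      unfolding G1_def G2_def using gamma_ok[OF sig] by blast+
    have key: "Q dvd p \<Longrightarrow> (l * l') ^ 2 dvd p * cj u0" for p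
    proof -
      assume "Q dvd p"
      then obtain r where "p = Q * r" by (elim dvdE)
      then have "p * cj u0 = (l ^ (s - \<alpha>' + y) * l' ^ (s - \<alpha> + x)) * r"
        unfolding cu0 Q_def by (simp add: algebra_simps power_add)
      moreover have "(l * l') ^ 2 dvd l ^ (s - \<alpha>' + y) * l' ^ (s - \<alpha> + x)"
        using dvd_ll2 e1 e2 by blast
      ultimately show ?thesis by simp
    qed
    have eqZ: "Z - G1 = e0 * Z - b * d + \<sigma> * X0" unfolding G1_def using G(3) by (simp add: algebra_simps)
    have "(Z - G1) * cj u0 = e0 * (Z * cj u0) - b * (d * cj u0) + X0 * (\<sigma> * cj u0)"
      unfolding eqZ by (simp add: algebra_simps)
    moreover have "(l * l') ^ 2 dvd e0 * (Z * cj u0) - b * (d * cj u0) + X0 * (\<sigma> * cj u0)"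
      by (rule dvd_add[OF dvd_diff[OF dvd_mult2[OF e02] dvd_mult[OF key[OF Qd]]] dvd_mult[OF key[OF Qs]]])
    ultimately have dZ: "(l * l') ^ 2 dvd (Z - G1) * cj u0" by simp
    have eqW: "W - G2 = e0 * W + a * d + \<sigma> * Y0" unfolding G2_def using G(4) by (simp add: algebra_simps)
    have "(W - G2) * cj u0 = e0 * (W * cj u0) + a * (d * cj u0) + Y0 * (\<sigma> * cj u0)"
      unfolding eqW by (simp add: algebra_simps)
    moreover have "(l * l') ^ 2 dvd e0 * (W * cj u0) + a * (d * cj u0) + Y0 * (\<sigma> * cj u0)"
      by (rule dvd_add[OF dvd_add[OF dvd_mult2[OF e02] dvd_mult[OF key[OF Qd]]] dvd_mult[OF key[OF Qs]]])
    ultimately have dW: "(l * l') ^ 2 dvd (W - G2) * cj u0" by simp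
    obtain Z' where Z': "(Z - G1) * cj u0 = (l * l') ^ 2 * Z'" using dZ by (elim dvdE)
    obtain W' where W': "(W - G2) * cj u0 = (l * l') ^ 2 * W'" using dW by (elim dvdE)
    show ?thesis
      apply (rule exI[of _ u0], rule exI[of _ X'], rule exI[of _ Y'], rule exI[of _ G1], rule exI[of _ G2],
          rule exI[of _ Z'], rule exI[of _ W'])
      using gX uu gam Z' W' by (intro conjI)
  next
    case False
    have sa3: "s - \<alpha> \<ge> 2" using False i3 by linarith
    have "l' ^ s dvd l' ^ \<alpha>'" using False by (simp add: le_imp_power_dvd)
    then have "l' ^ s dvd cj \<mu> * g" unfolding g_def by (intro dvd_mult dvd_mult)
    moreover have "l' ^ s dvd \<mu> * cj g + cj \<mu> * g" using dvd_trans[OF lsF(2) G(2)] .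
    ultimately have "l' ^ s dvd (\<mu> * cj g + cj \<mu> * g) - cj \<mu> * g" by (intro dvd_diff)
    then have "l' ^ s dvd \<mu> * cj g" by simp
    then have "l' ^ s dvd l' ^ \<alpha> * (l ^ \<alpha>' * \<mu>)" unfolding cjg by (simp add: algebra_simps)
    then have mul: "l' ^ (s - \<alpha>) dvd \<mu>" using lin_cancel2[of "cnj z" s \<alpha> z] zr' as unfolding l_def l'_def by blast
    have l2: "l' ^ 2 dvd l' ^ (s - \<alpha>)" using sa3 by (simp add: le_imp_power_dvd)
    have e02': "l' ^ 2 dvd e0" using e02 unfolding power_mult_distrib by (rule dvd_mult_right)
    have "Z = \<mu> * X0 + e0 * Z - b * d" using G(3) by (simp add: algebra_simps)
    moreover have "l' ^ 2 dvd \<mu> * X0 + e0 * Z - b * d"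
      by (rule dvd_diff[OF dvd_add[OF dvd_mult2[OF dvd_trans[OF l2 mul]] dvd_mult2[OF e02']] dvd_mult[OF dvd_trans[OF l2 dl']]])
    ultimately have dZ: "l' ^ 2 dvd Z" by simp
    have "W = \<mu> * Y0 + e0 * W + a * d" using G(4) by (simp add: algebra_simps)
    moreover have "l' ^ 2 dvd \<mu> * Y0 + e0 * W + a * d"
      by (rule dvd_add[OF dvd_add[OF dvd_mult2[OF dvd_trans[OF l2 mul]] dvd_mult2[OF e02']] dvd_mult[OF dvd_trans[OF l2 dl']]])
    ultimately have dW: "l' ^ 2 dvd W" by simp
    define u0 where "u0 = l' ^ 2"
    have cu0: "cj u0 = l ^ 2" unfolding u0_def using cl by simp
    have uu: "u0 * cj u0 = (l * l') ^ 2" unfolding cu0 unfolding u0_def by (simp add: power_mult_distrib mult.commute)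
    have a2: "2 \<le> \<alpha>'" using False s2 by linarith
    have p2: "l' ^ \<alpha>' = l' ^ 2 * l' ^ (\<alpha>' - 2)" using a2 by (metis le_add_diff_inverse power_add)
    have gu: "g = u0 * (l ^ \<alpha> * l' ^ (\<alpha>' - 2))" unfolding g_def u0_def p2
      by (simp add: algebra_simps)
    obtain Z1 where Z1: "Z = l' ^ 2 * Z1" using dZ by (elim dvdE)
    obtain W1 where W1: "W = l' ^ 2 * W1" using dW by (elim dvdE)
    have f1: "(Z - 0) * cj u0 = (l * l') ^ 2 * Z1" unfolding cu0 Z1 by (simp add: power_mult_distrib algebra_simps)
    have f2: "(W - 0) * cj u0 = (l * l') ^ 2 * W1" unfolding cu0 W1 by (simp add: power_mult_distrib algebra_simps)
    have f3: "g * X0 = u0 * (l ^ \<alpha> * l' ^ (\<alpha>' - 2) * X0)" "g * Y0 = u0 * (l ^ \<alpha> * l' ^ (\<alpha>' - 2) * Y0)"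
      unfolding gu by (simp_all add: mult.assoc)
    have f4: "(0::complex poly) * cj (g * X0) + (g * X0) * cj 0 = 0" "(0::complex poly) * cj (g * Y0) + (g * X0) * cj 0 = 0"
      "(0::complex poly) * cj (g * Y0) + (g * Y0) * cj 0 = 0" by simp_all
    show ?thesis
      apply (rule exI[of _ u0], rule exI[of _ "l ^ \<alpha> * l' ^ (\<alpha>' - 2) * X0"], rule exI[of _ "l ^ \<alpha> * l' ^ (\<alpha>' - 2) * Y0"],
         rule exI[of _ 0], rule exI[of _ 0], rule exI[of _ Z1], rule exI[of _ W1])
      using f1 f2 f3 f4 uu by (intro conjI)
  qed
qed



lemma core_lin:
  fixes z :: complex and X0 Y0 Z W :: "complex poly" and \<alpha> s :: nat
  defines "l \<equiv> lin z"
  defines "g \<equiv> l ^ \<alpha>"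
  assumes zr: "z = cnj z"
    and nd1: "\<not> (l dvd X0 \<and> l dvd Y0)"
    and M11: "l ^ s dvd hs (g * X0) Z"
    and M12: "l ^ s dvd mm (g * X0) (g * Y0) Z W"
    and M22: "l ^ s dvd hs (g * Y0) W"
    and i2: "s \<le> 2 * \<alpha>" and i3: "2 * \<alpha> + 2 \<le> 2 * s"
  shows "\<exists>u0 X' Y' G1 G2 Z' W'. g * X0 = u0 * X' \<and> g * Y0 = u0 * Y' \<and> u0 * cj u0 = l ^ 2 \<and>
    G1 * cj (g * X0) + (g * X0) * cj G1 = 0 \<and> G1 * cj (g * Y0) + (g * X0) * cj G2 = 0 \<and>
    G2 * cj (g * Y0) + (g * Y0) * cj G2 = 0 \<and>
    (Z - G1) * cj u0 = l ^ 2 * Z' \<and> (W - G2) * cj u0 = l ^ 2 * W'"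
proof -
  have cl: "cj l = l" unfolding l_def using zr by simp
  obtain a b e0 where bez: "a * X0 + b * Y0 + e0 = 1" and e0d: "l ^ s * l ^ s dvd e0"
    using bezout_local[of z X0 Y0 z s] nd1 unfolding l_def by blast
  define F where "F = l ^ s"
  have cF: "cj F = F" unfolding F_def using cl by simp
  have Fe0: "F dvd e0" using e0d unfolding F_def by (rule dvd_mult_left)
  define d where "d = X0 * W - Y0 * Z"
  define \<mu> where "\<mu> = a * Z + b * W"
  have G: "F dvd g * cj d" "F dvd \<mu> * cj g + cj \<mu> * g"
    "Z - \<mu> * X0 = e0 * Z - b * d" "W - \<mu> * Y0 = e0 * W + a * d"
    using generic[OF bez Fe0 cF, of g Z W] M11 M12 M22 unfolding F_def d_def \<mu>_def by auto
  have as: "\<alpha> + 1 \<le> s" using i3 by linarith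
  have a1: "1 \<le> \<alpha>" using i2 as by linarith
  have cjg: "cj g = g" unfolding g_def using cl by simp
  have e1: "s - \<alpha> = Suc (s - \<alpha> - 1)" using as by linarith
  have s1: "l dvd l ^ (s - \<alpha>)" by (subst e1) simp
  have "l ^ s dvd l ^ \<alpha> * cj d" using G(1) unfolding F_def g_def .
  then have "l ^ (s - \<alpha>) dvd cj d" using pow_cancel[of l s \<alpha> "cj d"] as unfolding l_def by simp
  then have "l ^ (s - \<alpha>) dvd d" using cj_dvd[of "l ^ (s - \<alpha>)" "cj d"] cl by simp
  then have dl: "l dvd d" using s1 by (rule dvd_trans[rotated])
  obtain k where k: "\<mu> * cj g + cj \<mu> * g = F * k" using G(2) by (elim dvdE)
  have FQ: "F = cj g * l ^ (s - \<alpha>)" unfolding cjg unfolding F_def g_def using as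
    by (simp flip: power_add)
  define \<tau> where "\<tau> = l ^ (s - \<alpha>) * k"
  have rho: "\<mu> * cj g + cj \<mu> * g = cj g * \<tau>" unfolding \<tau>_def using k FQ by (simp add: mult.assoc)
  define \<sigma> where "\<sigma> = [:1/2:] * \<tau>"
  have sig: "\<sigma> * cj g + g * cj \<sigma> = \<mu> * cj g + cj \<mu> * g" unfolding \<sigma>_def by (rule sigma_ok[OF rho])
  have ls: "l dvd \<sigma>" unfolding \<sigma>_def \<tau>_def using s1 by (metis dvd_mult dvd_mult2)
  have e2: "s = Suc (s - 1)" using as by linarith
  have "l dvd F" unfolding F_def by (subst e2) simp
  then have le0: "l dvd e0" using Fe0 by (rule dvd_trans)
  define u0 where "u0 = l"
  have cu0: "cj u0 = l" unfolding u0_def using cl by simp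
  have uu: "u0 * cj u0 = l ^ 2" unfolding cu0 unfolding u0_def by (simp add: power2_eq_square)
  have e3: "\<alpha> = Suc (\<alpha> - 1)" using a1 by linarith
  have pa: "l ^ \<alpha> = l * l ^ (\<alpha> - 1)" by (subst e3) simp
  have gX: "g * X0 = u0 * (l ^ (\<alpha> - 1) * X0)" "g * Y0 = u0 * (l ^ (\<alpha> - 1) * Y0)"
    unfolding g_def u0_def pa by (simp_all add: mult.assoc)
  define G1 where "G1 = (\<mu> - \<sigma>) * X0"
  define G2 where "G2 = (\<mu> - \<sigma>) * Y0"
  have gam: "G1 * cj (g * X0) + (g * X0) * cj G1 = 0" "G1 * cj (g * Y0) + (g * X0) * cj G2 = 0"
    "G2 * cj (g * Y0) + (g * Y0) * cj G2 = 0"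
    unfolding G1_def G2_def using gamma_ok[OF sig] by blast+
  have eqZ: "Z - G1 = e0 * Z - b * d + \<sigma> * X0" unfolding G1_def using G(3) by (simp add: algebra_simps)
  have "l dvd e0 * Z - b * d + \<sigma> * X0"
    by (rule dvd_add[OF dvd_diff[OF dvd_mult2[OF le0] dvd_mult[OF dl]] dvd_mult2[OF ls]])
  then obtain Z' where Z'': "Z - G1 = l * Z'" unfolding eqZ by (elim dvdE)
  have eqW: "W - G2 = e0 * W + a * d + \<sigma> * Y0" unfolding G2_def using G(4) by (simp add: algebra_simps)
  have "l dvd e0 * W + a * d + \<sigma> * Y0"
    by (rule dvd_add[OF dvd_add[OF dvd_mult2[OF le0] dvd_mult[OF dl]] dvd_mult2[OF ls]])
  then obtain W' where W'': "W - G2 = l * W'" unfolding eqW by (elim dvdE)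
  have Z': "(Z - G1) * cj u0 = l ^ 2 * Z'" unfolding Z'' cu0 by (simp add: power2_eq_square algebra_simps)
  have W': "(W - G2) * cj u0 = l ^ 2 * W'" unfolding W'' cu0 by (simp add: power2_eq_square algebra_simps)
  show ?thesis
    apply (rule exI[of _ u0], rule exI[of _ "l ^ (\<alpha> - 1) * X0"], rule exI[of _ "l ^ (\<alpha> - 1) * Y0"],
        rule exI[of _ G1], rule exI[of _ G2], rule exI[of _ Z'], rule exI[of _ W'])
    using gX uu gam Z' W' by (intro conjI)
qed



definition Rp :: "complex poly \<Rightarrow> real poly" where "Rp A = map_poly Re A"
definition Ip :: "complex poly \<Rightarrow> real poly" where "Ip A = map_poly Im A"
definition fromC :: "complex poly \<Rightarrow> complex poly \<Rightarrow> qpoly" where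
  "fromC A B = QP (Rp A) (Rp B) (- Ip B) (Ip A)"

lemma coeff_Rp [simp]: "coeff (Rp A) n = Re (coeff A n)" by (simp add: Rp_def coeff_map_poly)
lemma coeff_Ip [simp]: "coeff (Ip A) n = Im (coeff A n)" by (simp add: Ip_def coeff_map_poly)

lemma cX_fromC [simp]: "cX (fromC A B) = A"
  by (simp add: cX_def fromC_def poly_eq_iff complex_eq_iff)
lemma cY_fromC [simp]: "cY (fromC A B) = B"
  by (simp add: cY_def fromC_def poly_eq_iff complex_eq_iff)

lemma cXY_zero: "cX P = 0 \<Longrightarrow> cY P = 0 \<Longrightarrow> P = qzero"
proof -
  assume a: "cX P = 0" "cY P = 0"
  have "cp (qc0 P) + JJ * cp (qc3 P) = cp 0 + JJ * cp 0" using a(1) by (simp add: cX_def)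
  then have 1: "qc0 P = 0 \<and> qc3 P = 0" by (rule sep_ReIm)
  have "cp (qc1 P) + JJ * cp (- qc2 P) = cp 0 + JJ * cp 0" using a(2) by (simp add: cY_def)
  then have 2: "qc1 P = 0 \<and> - qc2 P = 0" by (rule sep_ReIm)
  show ?thesis using 1 2 by (intro qpoly.expand) (auto simp: qzero_def)
qed

lemma cp_dvd_reflect:
  assumes "cp a dvd cp b" shows "a dvd b"
proof (cases "a = 0")
  case True then show ?thesis using assms by simp
next
  case False
  have "cp b = cp a * cp (b div a) + cp (b mod a)"
    by (metis cp_add cp_mult div_mult_mod_eq mult.commute)
  then have "cp a dvd cp (b mod a)" using assms by (metis dvd_add_right_iff dvd_triv_left)
  moreover have "b mod a = 0 \<or> degree (b mod a) < degree a" using False by (rule degree_mod_less)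
  ultimately have "b mod a = 0"
    by (metis cp_eq_0 degree_cp dvd_imp_degree_le leD)
  then show ?thesis by (simp add: mod_eq_0_iff_dvd)
qed

lemma final_step:
  fixes X Y Z W u X' Y' G1 G2 Z' W' :: "complex poly" and f h :: "real poly"
  assumes cc: "CC (cX P) (cY P) (cX D) (cY D) h Lp Ld" and vl: "qvectorial Lp" "qvectorial Ld"
    and f0: "f \<noteq> 0" and fh: "f ^ 2 dvd h" and P0: "P \<noteq> qzero"
    and uX: "cX P = u * X'" and uY: "cY P = u * Y'" and uu: "u * cj u = cp f ^ 2"
    and g11: "G1 * cj (cX P) + cX P * cj G1 = 0" and g12: "G1 * cj (cY P) + cX P * cj G2 = 0"
    and g22: "G2 * cj (cY P) + cY P * cj G2 = 0"
    and eZ: "(cX D - G1) * cj u = cp f ^ 2 * Z'" and eW: "(cY D - G2) * cj u = cp f ^ 2 * W'"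
  shows "\<exists>P' D'. motion_poly P' D' \<and> three_eqs P' D' (h div f ^ 2) Lp Ld"
proof -
  have hh: "h = f ^ 2 * (h div f ^ 2)" using fh by simp
  have "CC X' Y' Z' W' (h div f ^ 2) Lp Ld"
    by (rule assembly[OF cc hh f0 uX uY uu g11 g12 g22 eZ eW])
  then have "CC (cX (fromC X' Y')) (cY (fromC X' Y')) (cX (fromC Z' W')) (cY (fromC Z' W')) (h div f ^ 2) Lp Ld"
    by simp
  then have te: "three_eqs (fromC X' Y') (fromC Z' W') (h div f ^ 2) Lp Ld" using tr_iff[OF vl] by blast
  have "fromC X' Y' \<noteq> qzero"
  proof
    assume "fromC X' Y' = qzero"
    then have "X' = 0" "Y' = 0" using cX_fromC[of X' Y'] cY_fromC[of X' Y'] by (simp_all add: qzero_def cX_def cY_def)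
    then have "cX P = 0" "cY P = 0" using uX uY by simp_all
    then show False using P0 cXY_zero by blast
  qed
  moreover have "qadd (qmult (fromC X' Y') (qcnj (fromC Z' W'))) (qmult (fromC Z' W') (qcnj (fromC X' Y'))) = qzero"
    using te unfolding three_eqs_def by blast
  ultimately show ?thesis using te unfolding motion_poly_def by blast
qed

lemma scale_step:
  fixes L u0 X' Y' G1 G2 Z' W' X Y Z W :: "complex poly" and c0 :: real
  assumes c0: "c0 \<noteq> 0" and cf: "cp f = smult (of_real c0) L"
    and "X = u0 * X'" "Y = u0 * Y'" "u0 * cj u0 = L ^ 2"
    and "(Z - G1) * cj u0 = L ^ 2 * Z'" "(W - G2) * cj u0 = L ^ 2 * W'"
  shows "X = smult (of_real c0) u0 * smult (of_real (1 / c0)) X' \<and>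
    Y = smult (of_real c0) u0 * smult (of_real (1 / c0)) Y' \<and>
    smult (of_real c0) u0 * cj (smult (of_real c0) u0) = cp f ^ 2 \<and>
    (Z - G1) * cj (smult (of_real c0) u0) = cp f ^ 2 * smult (of_real (1 / c0)) Z' \<and>
    (W - G2) * cj (smult (of_real c0) u0) = cp f ^ 2 * smult (of_real (1 / c0)) W'"
proof -
  have cjs: "cj (smult (of_real c0) u0) = smult (of_real c0) (cj u0)"
    by (simp add: poly_eq_iff)
  have k: "of_real c0 * of_real (1 / c0) = (1::complex)" using c0 by (simp flip: of_real_mult)
  show ?thesis using assms k unfolding cjs
    by (auto simp: power2_eq_square algebra_simps smult_smult)
qed



lemma nat_max_step:
  assumes "P 0" "\<And>n. P n \<Longrightarrow> n \<le> B"
  shows "\<exists>n. P n \<and> \<not> P (Suc n)"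
proof (rule ccontr)
  assume "\<not> ?thesis"
  then have st: "\<And>n. P n \<Longrightarrow> P (Suc n)" by blast
  have "P n" for n by (induct n) (use assms(1) st in auto)
  then show False using assms(2)[of "Suc B"] by simp
qed

lemma max_exp:
  fixes l X Y :: "complex poly"
  assumes nz: "X \<noteq> 0 \<or> Y \<noteq> 0" and dl: "degree l \<ge> 1"
  shows "\<exists>\<alpha> X1 Y1. X = l ^ \<alpha> * X1 \<and> Y = l ^ \<alpha> * Y1 \<and> \<not> (l dvd X1 \<and> l dvd Y1)"
proof -
  define P where "P n \<longleftrightarrow> l ^ n dvd X \<and> l ^ n dvd Y" for n
  have l0: "l \<noteq> 0" using dl by auto
  have bnd: "n \<le> degree X + degree Y" if "P n" for n
  proof -
    have dp: "degree (l ^ n) = n * degree l" using l0 by (rule degree_power_eq)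
    have "n \<le> degree (l ^ n)" unfolding dp using dl by simp
    moreover have "degree (l ^ n) \<le> degree X + degree Y"
      using nz that unfolding P_def
      by (metis dvd_imp_degree_le le_add1 le_add2 le_trans)
    ultimately show ?thesis by simp
  qed
  obtain n where n: "P n" "\<not> P (Suc n)"
    using nat_max_step[of P "degree X + degree Y"] bnd by (auto simp: P_def)
  obtain X1 where X1: "X = l ^ n * X1" using n(1) unfolding P_def by (elim conjE dvdE)
  obtain Y1 where Y1: "Y = l ^ n * Y1" using n(1) unfolding P_def by (elim conjE dvdE)
  have "\<not> (l dvd X1 \<and> l dvd Y1)"
  proof
    assume "l dvd X1 \<and> l dvd Y1"
    then have "P (Suc n)" unfolding P_def X1 Y1 by (simp add: mult_dvd_mono)
    then show False using n(2) by blast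
  qed
  then show ?thesis using X1 Y1 by blast
qed

lemma two_dvd_cancel:
  fixes p q :: "complex poly"
  shows "p dvd 2 * q \<Longrightarrow> p dvd q"
proof -
  assume "p dvd 2 * q"
  moreover have "2 * q = smult 2 q" by (simp add: numeral_poly)
  ultimately show ?thesis using dvd_smult_iff[of 2 p q] by simp
qed

lemma vec_nondeg:
  fixes x1 y1 x2 y2 :: complex
  assumes "\<not> (x1 = 0 \<and> y1 = 0)" "\<not> (x2 = 0 \<and> y2 = 0)"
  shows "\<not> (x1 * x2 - y1 * y2 = 0 \<and> x1 * y2 = 0 \<and> x2 * y1 = 0)"
  using assms by auto



lemma cj_of_nat [simp]: "cj (of_nat n) = of_nat n" by (induct n) auto
lemma cj_numeral [simp]: "cj (numeral n) = numeral n" by (metis of_nat_numeral cj_of_nat)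

lemma ineq_general:
  fixes f h :: "real poly" and z :: complex and X Y X1 Y1 X2 Y2 :: "complex poly"
    and \<alpha> \<alpha>' s :: nat and Lp :: qpoly
  defines "l \<equiv> lin z"
  assumes fl: "\<And>n p. f ^ n dvd p \<longleftrightarrow> l ^ n dvd cp p"
    and pf: "prime_elem f"
    and fs: "f ^ s dvd h" and fs1: "\<not> f ^ Suc s dvd h"
    and X1: "X = l ^ \<alpha> * X1" and Y1: "Y = l ^ \<alpha> * Y1" and nd1: "\<not> (l dvd X1 \<and> l dvd Y1)"
    and X2: "cj X = l ^ \<alpha>' * X2" and Y2: "cj Y = l ^ \<alpha>' * Y2" and nd2: "\<not> (l dvd X2 \<and> l dvd Y2)"
    and c1: "X * cj X - Y * cj Y = cp h * cp (qc3 Lp)"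
    and c2: "2 * (X * cj Y) = cp h * (cp (- qc2 Lp) + JJ * cp (qc1 Lp))"
    and L0: "qc0 Lp = 0"
    and gc: "f ^ 2 dvd h div gcd (rgcd Lp) h"
  shows "s \<le> \<alpha> + \<alpha>' \<and> \<alpha> + \<alpha>' + 2 \<le> 2 * s"
proof -
  define k where "k = \<alpha> + \<alpha>'"
  have e3: "X * cj X - Y * cj Y = l ^ k * (X1 * X2 - Y1 * Y2)"
    unfolding k_def power_add using X1 Y1 X2 Y2 by (simp add: algebra_simps)
  have e1: "X * cj Y = l ^ k * (X1 * Y2)"
    unfolding k_def power_add using X1 Y1 X2 Y2 by (simp add: algebra_simps)
  have e2: "cj X * Y = l ^ k * (X2 * Y1)"
    unfolding k_def power_add using X1 Y1 X2 Y2 by (simp add: algebra_simps)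
  have c2c: "2 * (cj X * Y) = cp h * (cp (- qc2 Lp) - JJ * cp (qc1 Lp))"
    using arg_cong[OF c2, of cj] by (simp add: mult.commute)
  have hA: "cp h dvd X * cj Y"
    using c2 by (metis dvd_triv_left two_dvd_cancel)
  have hB: "cp h dvd cj X * Y"
    using c2c by (metis dvd_triv_left two_dvd_cancel)
  have hC: "cp h dvd X * cj X - Y * cj Y" using c1 by simp
  have ls: "l ^ s dvd cp h" using fl fs by blast
  have sk: "s \<le> k"
  proof (rule ccontr)
    assume nsk: "\<not> s \<le> k"
    have "l ^ Suc k dvd l ^ s" apply (rule le_imp_power_dvd) using nsk by linarith
    then have d: "l ^ Suc k dvd cp h" using ls by (rule dvd_trans)
    have "l ^ Suc k dvd l ^ k * (X1 * X2 - Y1 * Y2)" using dvd_trans[OF d hC] e3 by simp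
    then have a: "l dvd X1 * X2 - Y1 * Y2" using pow_cancel[of l "Suc k" k] unfolding l_def by simp
    have "l ^ Suc k dvd l ^ k * (X1 * Y2)" using dvd_trans[OF d hA] e1 by simp
    then have b: "l dvd X1 * Y2" using pow_cancel[of l "Suc k" k] unfolding l_def by simp
    have "l ^ Suc k dvd l ^ k * (X2 * Y1)" using dvd_trans[OF d hB] e2 by simp
    then have c: "l dvd X2 * Y1" using pow_cancel[of l "Suc k" k] unfolding l_def by simp
    have "\<not> (poly X1 z = 0 \<and> poly Y1 z = 0)" "\<not> (poly X2 z = 0 \<and> poly Y2 z = 0)"
      using nd1 nd2 unfolding l_def lin_dvd_iff by auto
    moreover have "poly X1 z * poly X2 z - poly Y1 z * poly Y2 z = 0"
      "poly X1 z * poly Y2 z = 0" "poly X2 z * poly Y1 z = 0"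
      using a b c unfolding l_def lin_dvd_iff by simp_all
    ultimately show False using vec_nondeg by blast
  qed
  have lk3: "l ^ k dvd cp (h * qc3 Lp)" using c1 e3 by (metis cp_mult dvd_triv_left)
  have "2 * cp (h * qc2 Lp) = - (2 * (X * cj Y) + 2 * (cj X * Y))"
    unfolding c2 c2c by (simp add: algebra_simps)
  also have "\<dots> = l ^ k * (- (2 * (X1 * Y2)) - 2 * (X2 * Y1))" unfolding e1 e2 by (simp add: algebra_simps)
  finally have eq2: "2 * cp (h * qc2 Lp) = l ^ k * (- (2 * (X1 * Y2)) - 2 * (X2 * Y1))" .
  have "l ^ k dvd 2 * cp (h * qc2 Lp)" unfolding eq2 by (rule dvd_triv_left)
  then have lk2: "l ^ k dvd cp (h * qc2 Lp)" by (rule two_dvd_cancel)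
  have "2 * cp (h * qc1 Lp) = JJ * (2 * (cj X * Y) - 2 * (X * cj Y))"
    unfolding c2 c2c using JJ_sq by (simp; algebra)
  also have "\<dots> = l ^ k * (JJ * (2 * (X2 * Y1) - 2 * (X1 * Y2)))" unfolding e1 e2 by (simp add: algebra_simps)
  finally have eq1: "2 * cp (h * qc1 Lp) = l ^ k * (JJ * (2 * (X2 * Y1) - 2 * (X1 * Y2)))" .
  have "l ^ k dvd 2 * cp (h * qc1 Lp)" unfolding eq1 by (rule dvd_triv_left)
  then have lk1: "l ^ k dvd cp (h * qc1 Lp)" by (rule two_dvd_cancel)
  have fk: "f ^ k dvd h * qc1 Lp" "f ^ k dvd h * qc2 Lp" "f ^ k dvd h * qc3 Lp"
    using fl lk1 lk2 lk3 by blast+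
  obtain h1 where h1: "h = f ^ s * h1" using fs by (elim dvdE)
  have nf: "\<not> f dvd h1"
  proof
    assume "f dvd h1"
    then have "f ^ Suc s dvd f ^ s * h1" by simp
    then show False using fs1 h1 by simp
  qed
  have cop: "coprime (f ^ (k - s)) h1" using prime_elem_imp_coprime[OF pf nf] by simp
  have fsk: "f ^ k = f ^ s * f ^ (k - s)" using sk by (simp flip: power_add)
  have f0: "f \<noteq> 0" using pf by auto
  have ext: "f ^ (k - s) dvd q" if "f ^ k dvd h * q" for q
  proof -
    have "f ^ s * f ^ (k - s) dvd f ^ s * (h1 * q)" using that unfolding fsk h1 by (simp add: mult.assoc)
    then have "f ^ (k - s) dvd h1 * q" using f0 by simp
    then show ?thesis using cop by (simp add: coprime_dvd_mult_right_iff)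
  qed
  define j where "j = min (k - s) s"
  have fj: "f ^ j dvd f ^ (k - s)" "f ^ j dvd f ^ s" unfolding j_def by (simp_all add: le_imp_power_dvd)
  have "f ^ j dvd qc1 Lp" "f ^ j dvd qc2 Lp" "f ^ j dvd qc3 Lp"
    using ext[OF fk(1)] ext[OF fk(2)] ext[OF fk(3)] fj(1) by (meson dvd_trans)+
  then have "f ^ j dvd rgcd Lp" unfolding rgcd_def using L0 by simp
  moreover have "f ^ j dvd h" using fj(2) fs by (rule dvd_trans)
  ultimately have fjg: "f ^ j dvd gcd (rgcd Lp) h" by simp
  have hg: "h = gcd (rgcd Lp) h * (h div gcd (rgcd Lp) h)" by simp
  have "f ^ j * f ^ 2 dvd h" by (subst hg) (rule mult_dvd_mono[OF fjg gc])
  then have "f ^ (j + 2) dvd h" by (simp only: power_add)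
  then have "j + 2 \<le> s"
    using fs1 by (metis not_less_eq_eq le_imp_power_dvd dvd_trans)
  then have "k - s + 2 \<le> s" unfolding j_def by linarith
  then show ?thesis using sk unfolding k_def by linarith
qed



lemma finish:
  fixes L :: "complex poly" and c0 :: real
  assumes cc: "CC (cX P) (cY P) (cX D) (cY D) h Lp Ld" and vl: "qvectorial Lp" "qvectorial Ld"
    and f0: "f \<noteq> 0" and fh: "f ^ 2 dvd h" and P0: "P \<noteq> qzero"
    and c0: "c0 \<noteq> 0" and cf: "cp f = smult (of_real c0) L"
    and core: "\<exists>u0 X' Y' G1 G2 Z' W'. cX P = u0 * X' \<and> cY P = u0 * Y' \<and> u0 * cj u0 = L ^ 2 \<and>
    G1 * cj (cX P) + (cX P) * cj G1 = 0 \<and> G1 * cj (cY P) + (cX P) * cj G2 = 0 \<and>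
    G2 * cj (cY P) + (cY P) * cj G2 = 0 \<and>
    (cX D - G1) * cj u0 = L ^ 2 * Z' \<and> (cY D - G2) * cj u0 = L ^ 2 * W'"
  shows "\<exists>P' D'. motion_poly P' D' \<and> three_eqs P' D' (h div f ^ 2) Lp Ld"
proof -
  obtain u0 X' Y' G1 G2 Z' W' where o: "cX P = u0 * X'" "cY P = u0 * Y'" "u0 * cj u0 = L ^ 2"
    "G1 * cj (cX P) + (cX P) * cj G1 = 0" "G1 * cj (cY P) + (cX P) * cj G2 = 0"
    "G2 * cj (cY P) + (cY P) * cj G2 = 0"
    "(cX D - G1) * cj u0 = L ^ 2 * Z'" "(cY D - G2) * cj u0 = L ^ 2 * W'"
    using core by blast
  note sc = scale_step[OF c0 cf o(1) o(2) o(3) o(7) o(8)]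
  show ?thesis
    by (rule final_step[OF cc vl f0 fh P0 conjunct1[OF sc] conjunct1[OF conjunct2[OF sc]]
          conjunct1[OF conjunct2[OF conjunct2[OF sc]]] o(4) o(5) o(6)
          conjunct1[OF conjunct2[OF conjunct2[OF conjunct2[OF sc]]]]
          conjunct2[OF conjunct2[OF conjunct2[OF conjunct2[OF sc]]]]])
qed

lemma cc_M:
  assumes "CC X Y Z W h Lp Ld"
  shows "cp h dvd hs X Z" "cp h dvd mm X Y Z W" "cp h dvd hs Y W"
    "X * cj X - Y * cj Y = cp h * cp (qc3 Lp)"
    "2 * (X * cj Y) = cp h * (cp (- qc2 Lp) + JJ * cp (qc1 Lp))"
proof -
  from assms have c3: "- (hs X Z - hs Y W) = cp h * cp (qc3 Ld)"
   and c4: "2 * mm X Y Z W = cp h * (cp (qc2 Ld) - JJ * cp (qc1 Ld))"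
   and c5: "hs X Z + hs Y W = 0"
    unfolding CC_def by blast+
  have "2 * hs X Z = cp h * (- cp (qc3 Ld))" using c3 c5 by (simp add: algebra_simps; algebra)
  then show a: "cp h dvd hs X Z" by (metis dvd_triv_left two_dvd_cancel)
  show "cp h dvd mm X Y Z W" using c4 by (metis dvd_triv_left two_dvd_cancel)
  have "hs Y W = - hs X Z" using c5 by (simp add: eq_neg_iff_add_eq_0 add.commute)
  then show "cp h dvd hs Y W" using a by simp
  show "X * cj X - Y * cj Y = cp h * cp (qc3 Lp)"
    "2 * (X * cj Y) = cp h * (cp (- qc2 Lp) + JJ * cp (qc1 Lp))" using assms unfolding CC_def by blast+
qed

lemma cp_dvd: "a dvd b \<Longrightarrow> cp a dvd cp b" by (metis cp_mult dvdE dvdI)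



lemma case_lin:
  fixes f h :: "real poly"
  assumes cc: "CC (cX P) (cY P) (cX D) (cY D) h Lp Ld" and vl: "qvectorial Lp" "qvectorial Ld"
    and P0: "P \<noteq> qzero" and df: "degree f = 1" and fh: "f ^ 2 dvd h"
    and gc: "f ^ 2 dvd h div gcd (rgcd Lp) h"
    and fs: "f ^ s dvd h" and fs1: "\<not> f ^ Suc s dvd h"
  shows "\<exists>P' D'. motion_poly P' D' \<and> three_eqs P' D' (h div f ^ 2) Lp Ld"
proof -
  define c where "c = coeff f 0"
  define d where "d = coeff f 1"
  have d0: "d \<noteq> 0" using df unfolding d_def by (metis leading_coeff_0_iff one_neq_zero degree_0)
  have fcd: "f = [:c, d:]" unfolding c_def d_def
    by (rule poly_eqI) (auto simp: coeff_pCons coeff_eq_0 df split: nat.splits)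
  have f0: "f \<noteq> 0" using df by auto
  have pf: "prime_elem f" unfolding fcd using d0 by (rule prime_elem_linear_field_poly)
  define z where "z = complex_of_real (- c / d)"
  define l where "l = lin z"
  have zr: "z = cnj z" unfolding z_def by simp
  have cl: "cj l = l" unfolding l_def using zr by simp
  have cf: "cp f = smult (of_real d) l"
    unfolding fcd l_def lin_def z_def using d0
    by (simp add: poly_eq_iff coeff_pCons field_simps split: nat.splits)
  have fl: "f ^ n dvd p \<longleftrightarrow> l ^ n dvd cp p" for n p
  proof
    assume "f ^ n dvd p"
    then have "cp (f ^ n) dvd cp p" by (rule cp_dvd)
    then show "l ^ n dvd cp p" using d0 by (simp add: cf smult_power smult_dvd_iff split: if_splits)
  next
    assume "l ^ n dvd cp p"
    then have "cp (f ^ n) dvd cp p" using d0 by (simp add: cf smult_power smult_dvd_iff)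
    then show "f ^ n dvd p" by (rule cp_dvd_reflect)
  qed
  have nz: "cX P \<noteq> 0 \<or> cY P \<noteq> 0" using P0 cXY_zero by blast
  obtain \<alpha> X1 Y1 where X1: "cX P = l ^ \<alpha> * X1" and Y1: "cY P = l ^ \<alpha> * Y1"
    and nd1: "\<not> (l dvd X1 \<and> l dvd Y1)"
    using max_exp[OF nz, of l] unfolding l_def lin_def by auto
  have X2: "cj (cX P) = l ^ \<alpha> * cj X1" "cj (cY P) = l ^ \<alpha> * cj Y1" using X1 Y1 cl by simp_all
  have nd2: "\<not> (l dvd cj X1 \<and> l dvd cj Y1)" using nd1 cj_dvd_iff[of l] cl by metis
  note M = cc_M[OF cc]
  have ie: "s \<le> \<alpha> + \<alpha> \<and> \<alpha> + \<alpha> + 2 \<le> 2 * s"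
    using ineq_general[of f z, folded l_def, OF fl pf fs fs1 X1 Y1 nd1 X2 nd2 M(4) M(5) _ gc]
      vl(1) by (simp add: qvectorial_def)
  have ls: "l ^ s dvd cp h" using fl fs by blast
  have core: "\<exists>u0 X' Y' G1 G2 Z' W'. l ^ \<alpha> * X1 = u0 * X' \<and> l ^ \<alpha> * Y1 = u0 * Y' \<and> u0 * cj u0 = l ^ 2 \<and>
    G1 * cj (l ^ \<alpha> * X1) + (l ^ \<alpha> * X1) * cj G1 = 0 \<and> G1 * cj (l ^ \<alpha> * Y1) + (l ^ \<alpha> * X1) * cj G2 = 0 \<and>
    G2 * cj (l ^ \<alpha> * Y1) + (l ^ \<alpha> * Y1) * cj G2 = 0 \<and>
    (cX D - G1) * cj u0 = l ^ 2 * Z' \<and> (cY D - G2) * cj u0 = l ^ 2 * W'"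
    unfolding l_def
    apply (rule core_lin[OF zr])
    using nd1 dvd_trans[OF ls M(1)] dvd_trans[OF ls M(2)] dvd_trans[OF ls M(3)] ie
    unfolding l_def X1 Y1 by auto
  show ?thesis
    apply (rule finish[OF cc vl f0 fh P0 d0 cf])
    using core unfolding X1[symmetric] Y1[symmetric] .
qed



lemma poly_cp: "poly (cp p) (of_real x) = of_real (poly p x)"
  unfolding cp_def by (induction p) (auto simp: map_poly_pCons)

lemma core_quad_any:
  fixes z :: complex and X0 Y0 Z W :: "complex poly" and \<alpha> \<alpha>' s :: nat
  assumes zr: "z \<noteq> cnj z"
    and nd1: "\<not> (lin z dvd X0 \<and> lin z dvd Y0)" and nd2: "\<not> (lin (cnj z) dvd X0 \<and> lin (cnj z) dvd Y0)"
    and M11: "(lin z * lin (cnj z)) ^ s dvd hs ((lin z ^ \<alpha> * lin (cnj z) ^ \<alpha>') * X0) Z"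
    and M12: "(lin z * lin (cnj z)) ^ s dvd mm ((lin z ^ \<alpha> * lin (cnj z) ^ \<alpha>') * X0) ((lin z ^ \<alpha> * lin (cnj z) ^ \<alpha>') * Y0) Z W"
    and M22: "(lin z * lin (cnj z)) ^ s dvd hs ((lin z ^ \<alpha> * lin (cnj z) ^ \<alpha>') * Y0) W"
    and i2: "s \<le> \<alpha> + \<alpha>'" and i3: "\<alpha> + \<alpha>' + 2 \<le> 2 * s"
  shows "\<exists>u0 X' Y' G1 G2 Z' W'. (lin z ^ \<alpha> * lin (cnj z) ^ \<alpha>') * X0 = u0 * X' \<and>
    (lin z ^ \<alpha> * lin (cnj z) ^ \<alpha>') * Y0 = u0 * Y' \<and> u0 * cj u0 = (lin z * lin (cnj z)) ^ 2 \<and>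
    G1 * cj ((lin z ^ \<alpha> * lin (cnj z) ^ \<alpha>') * X0) + ((lin z ^ \<alpha> * lin (cnj z) ^ \<alpha>') * X0) * cj G1 = 0 \<and>
    G1 * cj ((lin z ^ \<alpha> * lin (cnj z) ^ \<alpha>') * Y0) + ((lin z ^ \<alpha> * lin (cnj z) ^ \<alpha>') * X0) * cj G2 = 0 \<and>
    G2 * cj ((lin z ^ \<alpha> * lin (cnj z) ^ \<alpha>') * Y0) + ((lin z ^ \<alpha> * lin (cnj z) ^ \<alpha>') * Y0) * cj G2 = 0 \<and>
    (Z - G1) * cj u0 = (lin z * lin (cnj z)) ^ 2 * Z' \<and> (W - G2) * cj u0 = (lin z * lin (cnj z)) ^ 2 * W'"
proof (cases "\<alpha> \<le> \<alpha>'")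
  case True
  show ?thesis by (rule core_quad[OF zr nd1 nd2 M11 M12 M22 True i2 i3])
next
  case False
  have e1: "lin (cnj z) ^ \<alpha>' * lin z ^ \<alpha> = lin z ^ \<alpha> * lin (cnj z) ^ \<alpha>'"
    and e2: "lin (cnj z) * lin z = lin z * lin (cnj z)" by (simp_all add: mult.commute)
  have zr2: "cnj z \<noteq> z" using zr by simp
  have i1: "\<alpha>' \<le> \<alpha>" using False by simp
  have i2': "s \<le> \<alpha>' + \<alpha>" and i3': "\<alpha>' + \<alpha> + 2 \<le> 2 * s" using i2 i3 by simp_all
  note inst = core_quad[of "cnj z" X0 Y0 s \<alpha>' \<alpha> Z W, unfolded complex_cnj_cnj e1 e2]
  show ?thesis by (rule inst[OF zr2 nd2 nd1 M11 M12 M22 i1 i2' i3'])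
qed

lemma case_quad:
  fixes f h :: "real poly"
  assumes cc: "CC (cX P) (cY P) (cX D) (cY D) h Lp Ld" and vl: "qvectorial Lp" "qvectorial Ld"
    and P0: "P \<noteq> qzero" and df: "degree f = 2" and irr: "irreducible f" and fh: "f ^ 2 dvd h"
    and gc: "f ^ 2 dvd h div gcd (rgcd Lp) h"
    and fs: "f ^ s dvd h" and fs1: "\<not> f ^ Suc s dvd h"
  shows "\<exists>P' D'. motion_poly P' D' \<and> three_eqs P' D' (h div f ^ 2) Lp Ld"
proof -
  have f0: "f \<noteq> 0" using df by auto
  have pf: "prime_elem f" using irr by (simp add: prime_elem_iff_irreducible)
  have "\<not> constant (poly (cp f))" using df by (simp add: constant_degree)
  then obtain z where rz: "poly (cp f) z = 0" using fundamental_theorem_of_algebra by blast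
  have zr: "z \<noteq> cnj z"
  proof
    assume "z = cnj z"
    then have "Im z = Im (cnj z)" by (rule arg_cong)
    then have "Im z = 0" by simp
    then have "z = of_real (Re z)" by (simp add: complex_eq_iff)
    then have "of_real (poly f (Re z)) = (0::complex)" using rz poly_cp[of f "Re z"] by simp
    then have "poly f (Re z) = 0" by simp
    then have "[:- Re z, 1:] dvd f" by (simp add: poly_eq_0_iff_dvd)
    then obtain q where q: "f = [:- Re z, 1:] * q" by (elim dvdE)
    have q0: "q \<noteq> 0" using q f0 by auto
    have "is_unit [:- Re z, 1:] \<or> is_unit q" using irreducibleD[OF irr q] .
    moreover have "\<not> is_unit [:- Re z, 1:]" by (simp add: is_unit_iff_degree)
    ultimately have "degree q = 0" using q0 is_unit_iff_degree by blast
    moreover have "degree f = degree [:- Re z, 1:] + degree q" unfolding q by (rule degree_mult_eq) (simp_all add: q0)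
    ultimately have "degree f = 1" by simp
    then show False using df by simp
  qed
  define l where "l = lin z"
  define l' where "l' = lin (cnj z)"
  have cl: "cj l = l'" "cj l' = l" unfolding l_def l'_def by simp_all
  have rz': "poly (cp f) (cnj z) = 0" using poly_cnj[of "cp f" z] rz by (simp add: cj_def[symmetric])
  have "l dvd cp f" "l' dvd cp f" using rz rz' unfolding l_def l'_def lin_dvd_iff by simp_all
  moreover have "coprime l l'" using coprime_lin[OF zr, of 1 1] unfolding l_def l'_def by simp
  ultimately have "l * l' dvd cp f" by (rule divides_mult)
  then obtain q where q: "cp f = l * l' * q" by (elim dvdE)
  have dll: "degree (l * l') = 2" unfolding l_def l'_def lin_def by (simp add: degree_mult_eq)
  have q0: "q \<noteq> 0" using q f0 by (metis cp_eq_0 mult_zero_right)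
  have "degree (cp f) = degree (l * l') + degree q" unfolding q using q0 by (simp add: degree_mult_eq l_def l'_def)
  then have "degree q = 0" using df dll by simp
  then obtain c where c: "q = [:c:]" by (elim degree_eq_zeroE)
  have cf0: "cp f = smult c (l * l')" using q c by simp
  have "coeff (cp f) 2 = c" unfolding cf0 l_def l'_def lin_def by (simp add: coeff_pCons numeral_2_eq_2)
  then have cc0: "c = of_real (coeff f 2)" by simp
  define c0 where "c0 = coeff f 2"
  have c00: "c0 \<noteq> 0" unfolding c0_def using df f0 by (metis leading_coeff_0_iff)
  have cf: "cp f = smult (of_real c0) (l * l')" using cf0 cc0 c0_def by simp
  have cfn: "cp (f ^ n) = smult (of_real c0 ^ n) (l ^ n * l' ^ n)" for n
    by (simp add: cf smult_power power_mult_distrib)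
  have fl: "f ^ n dvd p \<longleftrightarrow> l ^ n dvd cp p" for n p
  proof
    assume "f ^ n dvd p"
    then have "cp (f ^ n) dvd cp p" by (rule cp_dvd)
    moreover have "l ^ n dvd cp (f ^ n)" unfolding cfn by (simp add: dvd_smult)
    ultimately show "l ^ n dvd cp p" by (metis dvd_trans)
  next
    assume a: "l ^ n dvd cp p"
    then have "cj (l ^ n) dvd cj (cp p)" by (rule cj_dvd)
    then have "l' ^ n dvd cp p" using cl by simp
    moreover have "coprime (l ^ n) (l' ^ n)" using coprime_lin[OF zr] unfolding l_def l'_def by blast
    ultimately have "l ^ n * l' ^ n dvd cp p" using a divides_mult by blast
    then have "cp (f ^ n) dvd cp p" unfolding cfn using c00 by (simp add: smult_dvd_iff)
    then show "f ^ n dvd p" by (rule cp_dvd_reflect)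
  qed
  have nz: "cX P \<noteq> 0 \<or> cY P \<noteq> 0" using P0 cXY_zero by blast
  have nz': "cj (cX P) \<noteq> 0 \<or> cj (cY P) \<noteq> 0" using nz by simp
  obtain \<alpha> X1 Y1 where X1: "cX P = l ^ \<alpha> * X1" and Y1: "cY P = l ^ \<alpha> * Y1"
    and nd1: "\<not> (l dvd X1 \<and> l dvd Y1)"
    using max_exp[OF nz, of l] unfolding l_def lin_def by auto
  obtain \<alpha>' X2 Y2 where X2: "cj (cX P) = l ^ \<alpha>' * X2" and Y2: "cj (cY P) = l ^ \<alpha>' * Y2"
    and nd2: "\<not> (l dvd X2 \<and> l dvd Y2)"
    using max_exp[OF nz', of l] unfolding l_def lin_def by auto
  note M = cc_M[OF cc]
  have ie: "s \<le> \<alpha> + \<alpha>' \<and> \<alpha> + \<alpha>' + 2 \<le> 2 * s"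
    using ineq_general[of f z, folded l_def, OF fl pf fs fs1 X1 Y1 nd1 X2 Y2 nd2 M(4) M(5) _ gc]
      vl(1) by (simp add: qvectorial_def)
  have cpl: "coprime (l ^ \<alpha>) (l' ^ \<alpha>')" using coprime_lin[OF zr] unfolding l_def l'_def by blast
  have X2': "cX P = l' ^ \<alpha>' * cj X2" using arg_cong[OF X2, of cj] cl by simp
  have Y2': "cY P = l' ^ \<alpha>' * cj Y2" using arg_cong[OF Y2, of cj] cl by simp
  have a1: "l ^ \<alpha> dvd cX P" unfolding X1 by (rule dvd_triv_left)
  have a2: "l' ^ \<alpha>' dvd cX P" unfolding X2' by (rule dvd_triv_left)
  have "l ^ \<alpha> * l' ^ \<alpha>' dvd cX P" by (rule divides_mult[OF a1 a2 cpl])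
  then obtain X0 where X0: "cX P = (l ^ \<alpha> * l' ^ \<alpha>') * X0" by (elim dvdE)
  have b1: "l ^ \<alpha> dvd cY P" unfolding Y1 by (rule dvd_triv_left)
  have b2: "l' ^ \<alpha>' dvd cY P" unfolding Y2' by (rule dvd_triv_left)
  have "l ^ \<alpha> * l' ^ \<alpha>' dvd cY P" by (rule divides_mult[OF b1 b2 cpl])
  then obtain Y0 where Y0: "cY P = (l ^ \<alpha> * l' ^ \<alpha>') * Y0" by (elim dvdE)
  have lnz: "l ^ \<alpha> \<noteq> 0" "l' ^ \<alpha>' \<noteq> 0" "l' ^ \<alpha> \<noteq> 0" "l ^ \<alpha>' \<noteq> 0" unfolding l_def l'_def by simp_all
  have l00: "l \<noteq> 0" "l' \<noteq> 0" unfolding l_def l'_def by simp_all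
  have "X1 = l' ^ \<alpha>' * X0" using X1 X0 l00 by (simp add: mult.assoc)
  moreover have "Y1 = l' ^ \<alpha>' * Y0" using Y1 Y0 l00 by (simp add: mult.assoc)
  ultimately have nd1': "\<not> (l dvd X0 \<and> l dvd Y0)" using nd1 dvd_mult[of l X0 "l' ^ \<alpha>'"] dvd_mult[of l Y0 "l' ^ \<alpha>'"] by blast
  have "l ^ \<alpha>' * X2 = cj (cX P)" using X2 by simp
  also have "\<dots> = l ^ \<alpha>' * (l' ^ \<alpha> * cj X0)" unfolding X0 using cl by (simp add: mult_ac)
  finally have "l ^ \<alpha>' * X2 = l ^ \<alpha>' * (l' ^ \<alpha> * cj X0)" .
  then have x2e: "X2 = l' ^ \<alpha> * cj X0" using l00 by simp
  have "l ^ \<alpha>' * Y2 = cj (cY P)" using Y2 by simp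
  also have "\<dots> = l ^ \<alpha>' * (l' ^ \<alpha> * cj Y0)" unfolding Y0 using cl by (simp add: mult_ac)
  finally have "l ^ \<alpha>' * Y2 = l ^ \<alpha>' * (l' ^ \<alpha> * cj Y0)" .
  then have y2e: "Y2 = l' ^ \<alpha> * cj Y0" using l00 by simp
  have "l' dvd X0 \<Longrightarrow> l dvd cj X0" "l' dvd Y0 \<Longrightarrow> l dvd cj Y0"
    using cj_dvd[of l' X0] cj_dvd[of l' Y0] cl by simp_all
  with x2e y2e have nd2': "\<not> (l' dvd X0 \<and> l' dvd Y0)" using nd2 dvd_mult[of l "cj X0" "l' ^ \<alpha>"] dvd_mult[of l "cj Y0" "l' ^ \<alpha>"] by blast
  have lls: "(l * l') ^ s dvd cp h"
  proof -
    have "cp (f ^ s) dvd cp h" using fs by (rule cp_dvd)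
    moreover have "(l * l') ^ s dvd cp (f ^ s)" unfolding cfn by (simp add: dvd_smult power_mult_distrib)
    ultimately show ?thesis by (metis dvd_trans)
  qed
  have MX: "(l * l') ^ s dvd hs (cX P) (cX D)" "(l * l') ^ s dvd mm (cX P) (cY P) (cX D) (cY D)"
    "(l * l') ^ s dvd hs (cY P) (cY D)"
    using dvd_trans[OF lls M(1)] dvd_trans[OF lls M(2)] dvd_trans[OF lls M(3)] by simp_all
  have core: "\<exists>u0 X' Y' G1 G2 Z' W'. cX P = u0 * X' \<and> cY P = u0 * Y' \<and> u0 * cj u0 = (l * l') ^ 2 \<and>
    G1 * cj (cX P) + (cX P) * cj G1 = 0 \<and> G1 * cj (cY P) + (cX P) * cj G2 = 0 \<and>
    G2 * cj (cY P) + (cY P) * cj G2 = 0 \<and>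
    (cX D - G1) * cj u0 = (l * l') ^ 2 * Z' \<and> (cY D - G2) * cj u0 = (l * l') ^ 2 * W'"
    unfolding X0 Y0 unfolding l_def l'_def
    by (rule core_quad_any[OF zr nd1'[unfolded l_def l'_def] nd2'[unfolded l_def l'_def]
          MX[unfolded X0 Y0 l_def l'_def] conjunct1[OF ie] conjunct2[OF ie]])
  show ?thesis by (rule finish[OF cc vl f0 fh P0 c00 cf core])
qed



theorem lemma8:
  fixes Lp Ld P D :: qpoly and h f :: "real poly"
  assumes "line_poly Lp Ld"
    and "h \<noteq> 0"
    and "motion_poly P D"
    and "three_eqs P D h Lp Ld"
    and "degree f = 1 \<or> (degree f = 2 \<and> irreducible f)"
    and "f ^ 2 dvd h div gcd (rgcd Lp) h"
  shows "\<exists>m::nat. m \<ge> 1 \<and> f ^ (2 * m) dvd h \<and>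
           (\<exists>P' D'. motion_poly P' D' \<and> three_eqs P' D' (h div f ^ (2 * m)) Lp Ld)"
proof -
  have vl: "qvectorial Lp" "qvectorial Ld" using assms(1) unfolding line_poly_def by blast+
  have cc: "CC (cX P) (cY P) (cX D) (cY D) h Lp Ld" using tr_iff[OF vl] assms(4) by blast
  have P0: "P \<noteq> qzero" using assms(3) unfolding motion_poly_def by blast
  have "h div gcd (rgcd Lp) h dvd h" by (metis dvd_mult_div_cancel dvd_triv_right gcd_dvd2)
  with assms(6) have fh: "f ^ 2 dvd h" by (rule dvd_trans)
  have fd: "degree f \<ge> 1" using assms(5) by auto
  have f0: "f \<noteq> 0" using fd by auto
  have nu: "\<not> is_unit f" using fd is_unit_iff_degree[OF f0] by simp
  define s where "s = multiplicity f h"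
  have fs: "f ^ s dvd h" unfolding s_def by (rule multiplicity_dvd)
  have fs1: "\<not> f ^ Suc s dvd h" unfolding s_def using power_dvd_iff_le_multiplicity[OF assms(2) nu, of "Suc (multiplicity f h)"] by linarith
  have ex: "\<exists>P' D'. motion_poly P' D' \<and> three_eqs P' D' (h div f ^ 2) Lp Ld"
  proof (cases "degree f = 1")
    case True
    show ?thesis by (rule case_lin[OF cc vl P0 True fh assms(6) fs fs1])
  next
    case False
    then have "degree f = 2" "irreducible f" using assms(5) by blast+
    then show ?thesis using case_quad[OF cc vl P0 _ _ fh assms(6) fs fs1] by blast
  qed
  show ?thesis using ex fh by (intro exI[of _ 1]) simp
qed


end
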